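(* Let $f:\mathbb{R}^n\to\mathbb{R}^n$ be continuously differentiable with $f(0)=0$, and let $A=Df(0)$ be Hurwitz; write $g(x)=f(x)-Ax$. Let $Q$ be a symmetric positive definite matrix and $P$ the solution of $PA+A^TP=-Q$. Let $c>0$ and $r>0$ be such that $r<\lambda_{\min}(Q)$ and $x^TPx\le c$ implies $2x^TPg(x)\le r\|x\|^2$. Let $X\subset\mathbb{R}^n$ be compact, let $W_N:X\to\mathbb{R}$ be continuously differentiable, let $\dot W_N(x)=\nabla W_N(x)\cdot f(x)$, and let $\varepsilon>0$ and $c_2>c_1>0$. Suppose that for all $x\in X$: (a) $c_1\le W_N(x)\le c_2$ implies $\dot W_N(x)\le-\varepsilon$, and (b) $W_N(x)\le c_1$ implies $x^TPx\le c$. If the set $\mathcal{W}_{c_2}=\{x\in X: W_N(x)\le c_2\}$ does not intersect the boundary of $X$, then $\mathcal{W}_{c_2}$ is contained in the domain of attraction of the origin for $\dot x=f(x)$, i.e. every solution starting in $\mathcal{W}_{c_2}$ converges to $0$.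
   Context: The domain of attraction of the origin is the set of initial conditions $x$ whose solution $\phi(t,x)$ of $\dot x=f(x)$ satisfies $\phi(t,x)\to0$ as $t\to\infty$. $\lambda_{\min}(Q)$ denotes the smallest eigenvalue of $Q$. *)

theory Defs
  imports "HOL-Analysis.Analysis"
begin

definition cmat :: "real^'n^'n \<Rightarrow> complex^'n^'n" where
  "cmat A = (\<chi> i j. complex_of_real (A $ i $ j))"

definition hurwitz :: "real^'n^'n \<Rightarrow> bool" where
  "hurwitz A \<longleftrightarrow> (\<forall>\<mu>::complex. (\<exists>v::complex^'n. v \<noteq> 0 \<and> cmat A *v v = \<mu> *s v) \<longrightarrow> Re \<mu> < 0)"

definition symmetric_mat :: "real^'n^'n \<Rightarrow> bool" where
  "symmetric_mat Q \<longleftrightarrow> transpose Q = Q"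

definition pos_def_mat :: "real^'n^'n \<Rightarrow> bool" where
  "pos_def_mat Q \<longleftrightarrow> (\<forall>x. x \<noteq> 0 \<longrightarrow> x \<bullet> (Q *v x) > 0)"

definition lambda_min :: "real^'n^'n \<Rightarrow> real" where
  "lambda_min Q = Min {l::real. \<exists>v::real^'n. v \<noteq> 0 \<and> Q *v v = l *\<^sub>R v}"

definition is_solution :: "('a::real_normed_vector \<Rightarrow> 'a) \<Rightarrow> 'a \<Rightarrow> (real \<Rightarrow> 'a) \<Rightarrow> bool" where
  "is_solution f x0 \<phi> \<longleftrightarrow> \<phi> 0 = x0 \<and>
     (\<forall>t\<ge>0. (\<phi> has_vector_derivative f (\<phi> t)) (at t within {0..}))"

definition domain_of_attraction :: "('a::real_normed_vector \<Rightarrow> 'a) \<Rightarrow> 'a set" where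
  "domain_of_attraction f = {x0. (\<exists>\<phi>. is_solution f x0 \<phi>) \<and>
      (\<forall>\<phi>. is_solution f x0 \<phi> \<longrightarrow> (\<phi> \<longlongrightarrow> 0) at_top)}"

end

theory Submission
  imports Defs "Jordan_Normal_Form.Spectral_Radius" "HOL-Real_Asymp.Real_Asymp"
begin


lemma inner_mat_transpose: "(x::real^'n) \<bullet> (M *v y) = (transpose M *v x) \<bullet> y"
  by (metis dot_lmul_matrix inner_commute transpose_matrix_vector Finite_Cartesian_Product.transpose_transpose)

lemma sym_inner: assumes "symmetric_mat Q" shows "(y::real^'n) \<bullet> (Q *v z) = z \<bullet> (Q *v y)"
  using inner_mat_transpose[of y Q z] assms unfolding symmetric_mat_def by (metis inner_commute)

lemma cont_quad: "continuous_on S (\<lambda>x::real^'n. x \<bullet> (M *v x))"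
  by (intro continuous_intros bounded_linear.continuous_on[OF matrix_vector_mul_bounded_linear])

lemma quad_scale: "(c *\<^sub>R x) \<bullet> (M *v (c *\<^sub>R x)) = c^2 * (x \<bullet> (M *v (x::real^'n)))"
  by (simp add: matrix_vector_mult_scaleR power2_eq_square)

lemma sphere_min:
  obtains x0 :: "real^'n" where "norm x0 = 1" "\<And>x. (x0 \<bullet> (M *v x0)) * (norm x)^2 \<le> x \<bullet> (M *v x)"
proof -
  have ne: "sphere (0::real^'n) 1 \<noteq> {}"
    using norm_axis_1[of undefined] by (metis mem_sphere_0 empty_iff)
  obtain x0 where x0: "x0 \<in> sphere (0::real^'n) 1" and mn: "\<And>y. y \<in> sphere 0 1 \<Longrightarrow> x0 \<bullet> (M *v x0) \<le> y \<bullet> (M *v y)"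
    using continuous_attains_inf[OF compact_sphere ne cont_quad] by blast
  have "(x0 \<bullet> (M *v x0)) * (norm x)^2 \<le> x \<bullet> (M *v x)" for x
  proof (cases "x = 0")
    case True then show ?thesis by simp
  next
    case False
    let ?u = "(1 / norm x) *\<^sub>R x"
    have "?u \<in> sphere 0 1" using False by simp
    then have "x0 \<bullet> (M *v x0) \<le> (1/norm x)^2 * (x \<bullet> (M *v x))"
      using mn quad_scale by metis
    then have "(x0 \<bullet> (M *v x0)) * (norm x)^2 \<le> (1/norm x)^2 * (x \<bullet> (M *v x)) * (norm x)^2"
      by (simp add: mult_right_mono)
    also have "\<dots> = x \<bullet> (M *v x)" using False by (simp add: field_simps)
    finally show ?thesis .
  qed
  then show ?thesis using that x0 by simp
qed

lemma pd_bound: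
  assumes "\<And>x::real^'n. x \<noteq> 0 \<Longrightarrow> x \<bullet> (M *v x) > 0"
  obtains p where "p > 0" "\<And>x. p * (norm x)^2 \<le> x \<bullet> (M *v x)"
proof -
  obtain x0 :: "real^'n" where "norm x0 = 1" "\<And>x. (x0 \<bullet> (M *v x0)) * (norm x)^2 \<le> x \<bullet> (M *v x)"
    using sphere_min[where M=M] by blast
  moreover have "x0 \<noteq> 0" using \<open>norm x0 = 1\<close> by auto
  ultimately show ?thesis using that assms by blast
qed

lemma real_aux: fixes D c :: real
  assumes "D \<ge> 0" "c \<ge> 0" "\<And>s. 0 \<le> s^2 * c - 2 * s * D" shows "D = 0"
proof (rule ccontr)
  assume "D \<noteq> 0"
  then have D: "D > 0" using assms by simp
  define s where "s = D / (c + 1)"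
  have s: "s > 0" using D assms unfolding s_def by simp
  have "s * (2 * D) \<le> s * (s * c)" using assms(3)[of s] by (simp add: power2_eq_square algebra_simps)
  then have "2 * D \<le> s * c" using s by (simp add: mult_le_cancel_left_pos)
  also have "s * c = D * (c / (c + 1))" unfolding s_def using assms by (simp add: field_simps)
  also have "\<dots> \<le> D * 1" using D assms by (intro mult_left_mono) auto
  finally show False using D by simp
qed

lemma rayleigh:
  fixes Q :: "real^'n^'n"
  assumes sym: "symmetric_mat Q"
  obtains m v where "v \<noteq> 0" "Q *v v = m *\<^sub>R v" "\<And>x. m * (norm x)^2 \<le> x \<bullet> (Q *v x)"
proof -
  obtain x0 :: "real^'n" where n1: "norm x0 = 1" and ge: "\<And>x. (x0 \<bullet> (Q *v x0)) * (norm x)^2 \<le> x \<bullet> (Q *v x)"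
    using sphere_min[where M=Q] by blast
  define m where "m = x0 \<bullet> (Q *v x0)"
  define d where "d = Q *v x0 - m *\<^sub>R x0"
  define c where "c = d \<bullet> (Q *v d) - m * (norm d)^2"
  have c0: "c \<ge> 0" using ge[of d] unfolding c_def m_def by simp
  have dd: "d \<bullet> (Q *v x0) - m * (d \<bullet> x0) = (norm d)^2"
    unfolding d_def by (simp add: power2_norm_eq_inner inner_diff_left inner_diff_right algebra_simps)
  have "0 \<le> s^2 * c - 2 * s * (norm d)^2" for s
  proof -
    have "m * (norm (x0 - s *\<^sub>R d))^2 \<le> (x0 - s *\<^sub>R d) \<bullet> (Q *v (x0 - s *\<^sub>R d))"
      using ge unfolding m_def by blast
    moreover have "(norm (x0 - s *\<^sub>R d))^2 = 1 - 2 * s * (d \<bullet> x0) + s^2 * (norm d)^2"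
    proof -
      have "x0 \<bullet> x0 = 1" using n1 by (metis norm_eq_sqrt_inner real_sqrt_eq_1_iff)
      then show ?thesis unfolding power2_norm_eq_inner
        by (simp add: inner_diff_left inner_diff_right inner_commute algebra_simps power2_eq_square)
    qed
    moreover have "(x0 - s *\<^sub>R d) \<bullet> (Q *v (x0 - s *\<^sub>R d)) = m - 2 * s * (d \<bullet> (Q *v x0)) + s^2 * (d \<bullet> (Q *v d))"
    proof -
      have e1: "Q *v (x0 - s *\<^sub>R d) = Q *v x0 - s *\<^sub>R (Q *v d)"
        by (simp add: matrix_vector_mult_diff_distrib matrix_vector_mult_scaleR)
      have "(x0 - s *\<^sub>R d) \<bullet> (Q *v x0 - s *\<^sub>R (Q *v d)) = x0 \<bullet> (Q *v x0) - s * (x0 \<bullet> (Q *v d)) - s * (d \<bullet> (Q *v x0)) + s * s * (d \<bullet> (Q *v d))"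
        by (simp add: inner_diff_left inner_diff_right algebra_simps)
      then show ?thesis unfolding e1 m_def using sym_inner[OF sym, of x0 d] by (simp add: power2_eq_square)
    qed
    ultimately have "m * (1 - 2 * s * (d \<bullet> x0) + s^2 * (norm d)^2) \<le> m - 2 * s * (d \<bullet> (Q *v x0)) + s^2 * (d \<bullet> (Q *v d))"
      by simp
    then show ?thesis using dd unfolding c_def by (simp add: algebra_simps)
  qed
  then have "(norm d)^2 = 0" using real_aux[of "(norm d)^2" c] c0 by simp
  then have "Q *v x0 = m *\<^sub>R x0" unfolding d_def by simp
  moreover have "x0 \<noteq> 0" using n1 by auto
  ultimately show ?thesis using that ge unfolding m_def by blast
qed

lemma eig_finite:
  fixes Q :: "real^'n^'n"
  assumes sym: "symmetric_mat Q"
  shows "finite {l::real. \<exists>v::real^'n. v \<noteq> 0 \<and> Q *v v = l *\<^sub>R v}" (is "finite ?S")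
proof -
  define ev where "ev l = (SOME v. v \<noteq> 0 \<and> Q *v v = l *\<^sub>R v)" for l
  have ev: "ev l \<noteq> 0 \<and> Q *v ev l = l *\<^sub>R ev l" if "l \<in> ?S" for l
    using someI_ex[of "\<lambda>v. v \<noteq> 0 \<and> Q *v v = l *\<^sub>R v"] that unfolding ev_def by auto
  have inj: "inj_on ev ?S"
  proof (rule inj_onI)
    fix l l' assume l: "l \<in> ?S" and l': "l' \<in> ?S" and eq: "ev l = ev l'"
    have a: "Q *v ev l = l *\<^sub>R ev l" and nz: "ev l \<noteq> 0" using ev[OF l] by blast+
    have b: "Q *v ev l = l' *\<^sub>R ev l" using ev[OF l'] eq by simp
    from a b have "l *\<^sub>R ev l = l' *\<^sub>R ev l" by (metis)
    then show "l = l'" using nz by (metis scaleR_cancel_right)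
  qed
  have orth: "pairwise real_inner_class.orthogonal (ev ` ?S)"
    unfolding pairwise_def
  proof (intro ballI impI)
    fix a b assume a: "a \<in> ev ` ?S" and b: "b \<in> ev ` ?S" and ne: "a \<noteq> b"
    from a obtain l where l: "l \<in> ?S" and al: "a = ev l" by (rule imageE)
    from b obtain l' where l': "l' \<in> ?S" and bl: "b = ev l'" by (rule imageE)
    have "l \<noteq> l'" using ne al bl by blast
    have q1: "Q *v a = l *\<^sub>R a" using ev[OF l] al by blast
    have q2: "Q *v b = l' *\<^sub>R b" using ev[OF l'] bl by blast
    have "a \<bullet> (Q *v b) = b \<bullet> (Q *v a)" by (rule sym_inner[OF sym])
    then have "l' * (a \<bullet> b) = l * (a \<bullet> b)"
      unfolding q1 q2 by (simp add: inner_commute)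
    then have "a \<bullet> b = 0" using \<open>l \<noteq> l'\<close> by simp
    then show "real_inner_class.orthogonal a b" by (simp add: Linear_Algebra.orthogonal_def)
  qed
  have "0 \<notin> ev ` ?S"
  proof
    assume "0 \<in> ev ` ?S"
    then obtain l where l: "l \<in> ?S" and z: "0 = ev l" by (rule imageE)
    have "ev l \<noteq> 0" using ev[OF l] by blast
    then show False using z by simp
  qed
  then have "independent (ev ` ?S)" by (rule pairwise_orthogonal_independent[OF orth])
  then have "finite (ev ` ?S)" by (rule independent_bound[THEN conjunct1])
  then show ?thesis by (rule finite_imageD[OF _ inj])
qed

lemma lambda_min_bound:
  fixes Q :: "real^'n^'n"
  assumes sym: "symmetric_mat Q"
  shows "\<exists>m. lambda_min Q \<le> m \<and> (\<forall>x. m * (norm x)^2 \<le> x \<bullet> (Q *v x))"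
proof -
  obtain m v where "v \<noteq> 0" "Q *v v = m *\<^sub>R v" "\<And>x. m * (norm x)^2 \<le> x \<bullet> (Q *v x)"
    using rayleigh[OF sym] by blast
  moreover then have "lambda_min Q \<le> m"
    unfolding lambda_min_def using eig_finite[OF sym] by (intro Min_le) auto
  ultimately show ?thesis by blast
qed



lemma ode_exists:
  fixes F :: "'a::euclidean_space \<Rightarrow> 'a"
  assumes L: "L > 0" and lip: "\<And>x y. norm (F x - F y) \<le> L * norm (x - y)" and F0: "F 0 = 0"
  shows "\<exists>\<phi>. is_solution F x0 \<phi>"
proof -
  define K where "K = 2 * L"
  have K: "K > 0" using L by (simp add: K_def)
  define pos :: "real \<Rightarrow> real" where "pos t = max 0 t" for t
  have pos_cont: "continuous_on UNIV pos" unfolding pos_def by (intro continuous_intros)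
  have Fcont: "continuous_on UNIV F"
    by (rule lipschitz_on_continuous_on[of L]) (use L lip in \<open>auto simp: lipschitz_on_def dist_norm\<close>)
  define G :: "(real \<Rightarrow>\<^sub>C 'a) \<Rightarrow> real \<Rightarrow> 'a" where "G \<psi> s = F (exp (K * pos s) *\<^sub>R apply_bcontfun \<psi> s)" for \<psi> s
  have Gcont: "continuous_on S (G \<psi>)" for \<psi> S
    unfolding G_def
    by (intro continuous_on_compose2[OF Fcont] continuous_intros continuous_on_compose2[OF pos_cont]) auto
  have Gint: "G \<psi> integrable_on {a..b}" for \<psi> a b
    by (rule integrable_continuous_real[OF Gcont])
  have Gdiff: "norm (G \<psi>1 s - G \<psi>2 s) \<le> L * exp (K * s) * norm (\<psi>1 - \<psi>2)" if "s \<ge> 0" for \<psi>1 \<psi>2 s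
  proof -
    have "norm (G \<psi>1 s - G \<psi>2 s) \<le> L * norm (exp (K * s) *\<^sub>R apply_bcontfun \<psi>1 s - exp (K * s) *\<^sub>R apply_bcontfun \<psi>2 s)"
      unfolding G_def using lip that by (simp add: pos_def)
    also have "\<dots> = L * exp (K * s) * norm (apply_bcontfun (\<psi>1 - \<psi>2) s)"
      by (simp add: scaleR_diff_right[symmetric])
    also have "\<dots> \<le> L * exp (K * s) * norm (\<psi>1 - \<psi>2)"
      using L by (intro mult_left_mono norm_bounded) auto
    finally show ?thesis .
  qed
  have expint: "((\<lambda>s. L * exp (K * s) * M) has_integral (L * M * (exp (K * t) - 1) / K)) {0..t}" if "t \<ge> 0" for t M
  proof -
    have d: "((\<lambda>s. L * M / K * exp (K * s)) has_real_derivative L * exp (K * s) * M) (at s)" for s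
    proof -
      have "((\<lambda>s. exp (K * s)) has_real_derivative exp (K * s) * K) (at s)"
        by (auto intro!: derivative_eq_intros)
      from DERIV_cmult[OF this, of "L * M / K"] show ?thesis using K by (simp add: field_simps)
    qed
    have "((\<lambda>s. L * exp (K * s) * M) has_integral ((\<lambda>s. L * M / K * exp (K * s)) t - (\<lambda>s. L * M / K * exp (K * s)) 0)) {0..t}"
    proof (rule fundamental_theorem_of_calculus)
      show "0 \<le> t" using that .
      fix s assume "s \<in> {0..t}"
      show "((\<lambda>s. L * M / K * exp (K * s)) has_vector_derivative L * exp (K * s) * M) (at s within {0..t})"
        using d[of s] by (simp add: has_real_derivative_iff_has_vector_derivative[symmetric] has_field_derivative_at_within)
    qed
    then show ?thesis by (simp add: diff_divide_distrib right_diff_distrib)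
  qed
  have Iest: "norm (integral {0..t} (G \<psi>1) - integral {0..t} (G \<psi>2)) \<le> exp (K * t) / 2 * norm (\<psi>1 - \<psi>2)"
    if "t \<ge> 0" for t \<psi>1 \<psi>2
  proof -
    have "norm (integral {0..t} (G \<psi>1) - integral {0..t} (G \<psi>2)) = norm (integral {0..t} (\<lambda>s. G \<psi>1 s - G \<psi>2 s))"
      by (simp add: integral_diff[OF Gint Gint])
    also have "\<dots> \<le> integral {0..t} (\<lambda>s. L * exp (K * s) * norm (\<psi>1 - \<psi>2))"
      apply (rule integral_norm_bound_integral)
      apply (rule integrable_diff[OF Gint Gint])
      apply (rule has_integral_integrable[OF expint[OF that]])
      using Gdiff by auto
    also have "\<dots> = L * norm (\<psi>1 - \<psi>2) * (exp (K * t) - 1) / K"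
      using expint[OF that] by (rule integral_unique)
    also have "\<dots> \<le> exp (K * t) / 2 * norm (\<psi>1 - \<psi>2)"
      using K L by (simp add: K_def field_simps)
    finally show ?thesis .
  qed
  define T0 :: "(real \<Rightarrow>\<^sub>C 'a) \<Rightarrow> real \<Rightarrow> 'a" where
    "T0 \<psi> t = exp (- K * pos t) *\<^sub>R (x0 + integral {0..pos t} (G \<psi>))" for \<psi> t
  have T0cont: "continuous_on UNIV (T0 \<psi>)" for \<psi>
  proof -
    have "isCont (\<lambda>t. integral {0..pos t} (G \<psi>)) x" for x
    proof -
      have "continuous_on {- \<bar>x\<bar> - 1..\<bar>x\<bar> + 1} (\<lambda>t. integral {0..pos t} (G \<psi>))"
        apply (rule continuous_on_compose2[OF indefinite_integral_continuous_1[OF Gint, of 0 "\<bar>x\<bar> + 1"]])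
         apply (rule continuous_on_subset[OF pos_cont], simp)
        by (auto simp: pos_def)
      then show ?thesis by (rule continuous_on_interior) auto
    qed
    then have "continuous_on UNIV (\<lambda>t. integral {0..pos t} (G \<psi>))"
      by (simp add: continuous_at_imp_continuous_on)
    then show ?thesis unfolding T0_def
      by (intro continuous_intros continuous_on_compose2[OF pos_cont]) auto
  qed
  have T0bnd: "norm (T0 \<psi> t) \<le> norm x0 + norm \<psi> / 2" for \<psi> t
  proof -
    have G0: "G 0 = (\<lambda>s. 0)" by (simp add: G_def fun_eq_iff F0)
    have "norm (integral {0..pos t} (G \<psi>)) \<le> exp (K * pos t) / 2 * norm \<psi>"
      using Iest[of "pos t" \<psi> 0] by (simp add: G0 pos_def)
    then have "norm (T0 \<psi> t) \<le> exp (- K * pos t) * (norm x0 + exp (K * pos t) / 2 * norm \<psi>)"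
      unfolding T0_def by (auto intro!: mult_left_mono order.trans[OF norm_triangle_ineq])
    also have "\<dots> \<le> norm x0 + norm \<psi> / 2"
    proof -
      have e: "exp (- K * pos t) * exp (K * pos t) = 1"
        by (simp add: exp_minus_inverse mult.commute)
      have "exp (- K * pos t) \<le> 1" using K by (simp add: pos_def)
      then have 1: "exp (- K * pos t) * norm x0 \<le> norm x0" by (simp add: mult_left_le_one_le)
      have "exp (- K * pos t) * (norm x0 + exp (K * pos t) / 2 * norm \<psi>)
          = exp (- K * pos t) * norm x0 + (exp (- K * pos t) * exp (K * pos t)) * norm \<psi> / 2"
        by (simp add: algebra_simps)
      also have "\<dots> = exp (- K * pos t) * norm x0 + norm \<psi> / 2" using e by simp
      finally show ?thesis using 1 by linarith
    qed
    finally show ?thesis .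
  qed
  have T0bc: "T0 \<psi> \<in> bcontfun" for \<psi>
    by (rule bcontfun_normI[OF T0cont T0bnd])
  define T where "T \<psi> = Bcontfun (T0 \<psi>)" for \<psi>
  have Tapp: "apply_bcontfun (T \<psi>) = T0 \<psi>" for \<psi>
    unfolding T_def using T0bc by (simp add: Bcontfun_inverse)
  have contr: "dist (T \<psi>1) (T \<psi>2) \<le> 1/2 * dist \<psi>1 \<psi>2" for \<psi>1 \<psi>2
  proof (rule dist_bound)
    fix t
    have "dist (T \<psi>1 t) (T \<psi>2 t) = exp (- K * pos t) * norm (integral {0..pos t} (G \<psi>1) - integral {0..pos t} (G \<psi>2))"
      unfolding Tapp T0_def dist_norm by (simp add: scaleR_diff_right[symmetric])
    also have "\<dots> \<le> exp (- K * pos t) * (exp (K * pos t) / 2 * norm (\<psi>1 - \<psi>2))"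
      using Iest[of "pos t" \<psi>1 \<psi>2] by (intro mult_left_mono) (auto simp: pos_def)
    also have "\<dots> = 1/2 * dist \<psi>1 \<psi>2"
      by (simp add: exp_minus field_simps dist_norm)
    finally show "dist (T \<psi>1 t) (T \<psi>2 t) \<le> 1/2 * dist \<psi>1 \<psi>2" .
  qed
  obtain \<psi> where fixT: "T \<psi> = \<psi>"
    using banach_fix_type[of "1/2" T] contr by auto
  define \<phi> where "\<phi> t = exp (K * pos t) *\<^sub>R apply_bcontfun \<psi> t" for t
  have phi_eq: "\<phi> t = x0 + integral {0..pos t} (\<lambda>s. F (\<phi> s))" for t
  proof -
    have "\<phi> t = exp (K * pos t) *\<^sub>R T0 \<psi> t"
      using fixT unfolding \<phi>_def by (metis Tapp)
    also have "\<dots> = x0 + integral {0..pos t} (G \<psi>)"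
      unfolding T0_def by (simp add: exp_minus)
    finally show ?thesis unfolding G_def \<phi>_def[symmetric] by simp
  qed
  have Fphi_cont: "continuous_on S (\<lambda>s. F (\<phi> s))" for S
    using Gcont[where \<psi>=\<psi> and S=S] unfolding G_def \<phi>_def .
  have "is_solution F x0 \<phi>"
    unfolding is_solution_def
  proof safe
    show "\<phi> 0 = x0" using phi_eq[of 0] by (simp add: pos_def)
    fix t :: real assume t: "t \<ge> 0"
    have d: "((\<lambda>u. x0 + integral {0..u} (\<lambda>s. F (\<phi> s))) has_vector_derivative F (\<phi> t)) (at t within {0..t+1})"
      using integral_has_vector_derivative[OF Fphi_cont, of t 0 "t+1"] t
      by (auto intro!: derivative_eq_intros)
    have ae: "at t within {0..t+1} = at t within {0..}"
      by (rule at_within_nhd[where S="{t - 1 <..< t + 1}"]) auto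
    have d2: "((\<lambda>u. x0 + integral {0..u} (\<lambda>s. F (\<phi> s))) has_vector_derivative F (\<phi> t)) (at t within {0..})"
      using d ae by simp
    show "(\<phi> has_vector_derivative F (\<phi> t)) (at t within {0..})"
    proof (rule has_vector_derivative_transform[OF _ _ d2])
      show "t \<in> {0..}" using t by simp
      fix x :: real assume "x \<in> {0..}"
      then have "pos x = x" by (simp add: pos_def)
      then show "\<phi> x = x0 + integral {0..x} (\<lambda>s. F (\<phi> s))" by (metis phi_eq)
    qed
  qed
  then show ?thesis by blast
qed



lemma cmat_mult: "cmat (X ** Y) = cmat X ** cmat (Y::real^'n^'n)"
  by (simp add: Finite_Cartesian_Product.vec_eq_iff matrix_matrix_mult_def cmat_def)

lemma cmat_add: "cmat (X + Y) = cmat X + cmat (Y::real^'n^'n)"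
  by (simp add: Finite_Cartesian_Product.vec_eq_iff cmat_def)

lemma cmat_diff: "cmat (X - Y) = cmat X - cmat (Y::real^'n^'n)"
  by (simp add: Finite_Cartesian_Product.vec_eq_iff cmat_def)

lemma cmat_one: "cmat (Finite_Cartesian_Product.mat 1 :: real^'n^'n) = Finite_Cartesian_Product.mat 1"
  by (simp add: Finite_Cartesian_Product.vec_eq_iff cmat_def Finite_Cartesian_Product.mat_def)

definition cvec :: "real^'n \<Rightarrow> complex^'n" where "cvec x = (\<chi> i. complex_of_real (x $ i))"

lemma cmat_cvec: "cmat M *v cvec x = cvec (M *v x)"
  by (simp add: Finite_Cartesian_Product.vec_eq_iff cmat_def cvec_def matrix_vector_mult_def)

lemma cvec_eq0: "cvec x = 0 \<longleftrightarrow> x = 0"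
  by (simp add: Finite_Cartesian_Product.vec_eq_iff cvec_def)

lemma hurwitz_inv:
  fixes A :: "real^'n^'n"
  assumes "hurwitz A"
  obtains C where "(Finite_Cartesian_Product.mat 1 - A) ** C = Finite_Cartesian_Product.mat 1"
proof -
  have "\<forall>x. (Finite_Cartesian_Product.mat 1 - A) *v x = 0 \<longrightarrow> x = 0"
  proof (intro allI impI)
    fix x :: "real^'n" assume "(Finite_Cartesian_Product.mat 1 - A) *v x = 0"
    then have Ax: "A *v x = x" by (simp add: matrix_vector_mult_diff_rdistrib)
    show "x = 0"
    proof (rule ccontr)
      assume "x \<noteq> 0"
      then have "cvec x \<noteq> 0" by (simp add: cvec_eq0)
      moreover have "cmat A *v cvec x = 1 *s cvec x" by (simp add: cmat_cvec Ax)
      ultimately have "Re 1 < 0" using assms unfolding hurwitz_def by blast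
      then show False by simp
    qed
  qed
  then obtain C' where "C' ** (Finite_Cartesian_Product.mat 1 - A) = Finite_Cartesian_Product.mat 1" using matrix_left_invertible_ker by blast
  then have "(Finite_Cartesian_Product.mat 1 - A) ** C' = Finite_Cartesian_Product.mat 1" using matrix_left_right_inverse by blast
  then show ?thesis using that by blast
qed

lemma cayley_ev:
  fixes A C :: "real^'n^'n"
  assumes hur: "hurwitz A" and C: "(Finite_Cartesian_Product.mat 1 - A) ** C = Finite_Cartesian_Product.mat 1"
    and v: "v \<noteq> 0" and ev: "cmat ((Finite_Cartesian_Product.mat 1 + A) ** C) *v v = \<mu> *s v"
  shows "cmod \<mu> < 1"
proof -
  define u where "u = cmat C *v v"
  define Au where "Au = cmat A *v u"
  have vu: "v = u - Au"
  proof -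
    have "v = cmat ((Finite_Cartesian_Product.mat 1 - A) ** C) *v v" by (simp add: C cmat_one)
    also have "\<dots> = u - Au" unfolding u_def Au_def
      by (simp add: cmat_mult cmat_diff cmat_one matrix_vector_mul_assoc[symmetric] matrix_vector_mult_diff_rdistrib)
    finally show ?thesis .
  qed
  have Bv: "cmat ((Finite_Cartesian_Product.mat 1 + A) ** C) *v v = u + Au" unfolding u_def Au_def
    by (simp add: cmat_mult cmat_add cmat_one matrix_vector_mul_assoc[symmetric] matrix_vector_mult_add_rdistrib)
  have e: "u + Au = \<mu> *s (u - Au)" using ev Bv vu by metis
  have comp: "u $ i + Au $ i = \<mu> * (u $ i - Au $ i)" for i
    using e by (simp add: Finite_Cartesian_Product.vec_eq_iff right_diff_distrib)
  have u0: "u \<noteq> 0" using v vu by (auto simp: Au_def)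
  have m1: "\<mu> \<noteq> -1"
  proof
    assume "\<mu> = -1"
    then have "u $ i = 0" for i using comp[of i] by simp
    then show False using u0 by (simp add: Finite_Cartesian_Product.vec_eq_iff)
  qed
  then have m1': "\<mu> + 1 \<noteq> 0" using eq_neg_iff_add_eq_0 by blast
  have "Au $ i = ((\<mu> - 1) / (\<mu> + 1)) * u $ i" for i
  proof -
    have "Au $ i * (\<mu> + 1) - (\<mu> - 1) * u $ i = (u $ i + Au $ i) - \<mu> * (u $ i - Au $ i)"
      by (simp add: algebra_simps)
    then have "Au $ i * (\<mu> + 1) = (\<mu> - 1) * u $ i" using comp[of i] by simp
    then show ?thesis using m1' by (simp add: field_simps)
  qed
  then have "Au = ((\<mu> - 1) / (\<mu> + 1)) *s u" by (simp add: Finite_Cartesian_Product.vec_eq_iff)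
  then have "cmat A *v u = ((\<mu> - 1) / (\<mu> + 1)) *s u" by (simp add: Au_def)
  then have re: "Re ((\<mu> - 1) / (\<mu> + 1)) < 0" using hur u0 unfolding hurwitz_def by blast
  have den: "(Re (\<mu> + 1))^2 + (Im (\<mu> + 1))^2 > 0"
  proof -
    have "cmod (\<mu> + 1) > 0" using m1' by simp
    then have "(cmod (\<mu> + 1))^2 > 0" by simp
    then show ?thesis by (simp only: cmod_power2)
  qed
  have "Re ((\<mu> - 1) / (\<mu> + 1)) = ((Re \<mu>)^2 + (Im \<mu>)^2 - 1) / ((Re (\<mu> + 1))^2 + (Im (\<mu> + 1))^2)"
    by (simp add: Re_divide power2_eq_square algebra_simps)
  then have "(Re \<mu>)^2 + (Im \<mu>)^2 < 1" using re den by (simp add: divide_less_0_iff)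
  then show ?thesis by (simp add: cmod_def)
qed



lemma neg_mv: "(- M) *v (v::real^'n) = - (M *v v)"
  by (simp add: Finite_Cartesian_Product.vec_eq_iff matrix_vector_mult_def sum_negf)

lemma bil_identity:
  fixes A M :: "real^'n^'n"
  shows "((Finite_Cartesian_Product.mat 1 + A) *v y) \<bullet> (M *v ((Finite_Cartesian_Product.mat 1 + A) *v u)) - ((Finite_Cartesian_Product.mat 1 - A) *v y) \<bullet> (M *v ((Finite_Cartesian_Product.mat 1 - A) *v u))
     = 2 * (y \<bullet> ((M ** A + transpose A ** M) *v u))"
proof -
  have l: "(Finite_Cartesian_Product.mat 1 + A) *v y = y + A *v y" "(Finite_Cartesian_Product.mat 1 - A) *v y = y - A *v y"
    "(Finite_Cartesian_Product.mat 1 + A) *v u = u + A *v u" "(Finite_Cartesian_Product.mat 1 - A) *v u = u - A *v u"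
    by (simp_all add: matrix_vector_mult_add_rdistrib matrix_vector_mult_diff_rdistrib)
  have r: "y \<bullet> ((M ** A + transpose A ** M) *v u) = y \<bullet> (M *v (A *v u)) + (A *v y) \<bullet> (M *v u)"
  proof -
    have t: "y \<bullet> (transpose A *v v) = (A *v y) \<bullet> v" for v
      using inner_mat_transpose[of y "transpose A" v] by (metis Finite_Cartesian_Product.transpose_transpose)
    have "(M ** A + transpose A ** M) *v u = M *v (A *v u) + transpose A *v (M *v u)"
      by (simp del: transpose_matrix_vector add: matrix_vector_mult_add_rdistrib matrix_vector_mul_assoc)
    then show ?thesis by (simp del: transpose_matrix_vector add: inner_add_right t)
  qed
  show ?thesis unfolding l r
    by (simp add: matrix_vector_right_distrib matrix_vector_mult_diff_distrib inner_add_left inner_add_right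
        inner_diff_left inner_diff_right algebra_simps)
qed

lemma lyap_discrete:
  fixes A P Q C :: "real^'n^'n"
  assumes lyap: "P ** A + transpose A ** P = - Q"
    and Qsym: "symmetric_mat Q"
    and q: "q > 0" and Qb: "\<And>x. q * (norm x)^2 \<le> x \<bullet> (Q *v x)"
    and C1: "(Finite_Cartesian_Product.mat 1 - A) ** C = Finite_Cartesian_Product.mat 1"
    and bnd: "\<And>x. bounded (range (\<lambda>k. ((*v) ((Finite_Cartesian_Product.mat 1 + A) ** C) ^^ k) x))"
  shows "transpose P = P \<and> (\<forall>x. x \<noteq> 0 \<longrightarrow> x \<bullet> (P *v x) > 0)"
proof -
  define B where "B = (Finite_Cartesian_Product.mat 1 + A) ** C"
  define xs where "xs x k = ((*v) B ^^ k) x" for x k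
  have xsS: "xs x (Suc k) = B *v xs x k" for x k unfolding xs_def by simp
  have xs0: "xs x 0 = x" for x unfolding xs_def by simp
  have zC: "(Finite_Cartesian_Product.mat 1 - A) *v (C *v z) = z" for z
    by (simp add: matrix_vector_mul_assoc C1)
  have BC: "B *v z = (Finite_Cartesian_Product.mat 1 + A) *v (C *v z)" for z
    by (simp add: matrix_vector_mul_assoc B_def)
  define V where "V z = z \<bullet> (P *v z)" for z
  have Vstep: "V (B *v z) - V z = - 2 * ((C *v z) \<bullet> (Q *v (C *v z)))" for z
  proof -
    have "V (B *v z) - V z = 2 * ((C *v z) \<bullet> ((P ** A + transpose A ** P) *v (C *v z)))"
      unfolding V_def BC using bil_identity[of A "C *v z" P "C *v z"] zC[of z] by simp
    then show ?thesis unfolding lyap neg_mv by simp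
  qed
  define \<beta> where "\<beta> z w = z \<bullet> (P *v w) - w \<bullet> (P *v z)" for z w
  have bstep: "\<beta> (B *v z) (B *v w) = \<beta> z w" for z w
  proof -
    have 1: "((Finite_Cartesian_Product.mat 1 + A) *v (C *v z)) \<bullet> (P *v ((Finite_Cartesian_Product.mat 1 + A) *v (C *v w))) - z \<bullet> (P *v w)
       = 2 * ((C *v z) \<bullet> ((P ** A + transpose A ** P) *v (C *v w)))"
      using bil_identity[of A "C *v z" P "C *v w"] zC[of z] zC[of w] by simp
    have 2: "((Finite_Cartesian_Product.mat 1 + A) *v (C *v w)) \<bullet> (P *v ((Finite_Cartesian_Product.mat 1 + A) *v (C *v z))) - w \<bullet> (P *v z)
       = 2 * ((C *v w) \<bullet> ((P ** A + transpose A ** P) *v (C *v z)))"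
      using bil_identity[of A "C *v w" P "C *v z"] zC[of z] zC[of w] by simp
    have 3: "(C *v z) \<bullet> (Q *v (C *v w)) = (C *v w) \<bullet> (Q *v (C *v z))"
      by (rule sym_inner[OF Qsym])
    show ?thesis using 1 2 3 unfolding \<beta>_def BC lyap neg_mv by simp
  qed
  obtain Kp where Kp: "Kp > 0" "\<And>v. norm (P *v v) \<le> norm v * Kp"
    using bounded_linear.pos_bounded[OF matrix_vector_mul_bounded_linear[of P]] by blast
  have Vabs: "\<bar>V v\<bar> \<le> Kp * (norm v)^2" for v
  proof -
    have "\<bar>V v\<bar> \<le> norm v * norm (P *v v)" unfolding V_def by (rule Cauchy_Schwarz_ineq2)
    also have "\<dots> \<le> norm v * (norm v * Kp)" by (intro mult_left_mono Kp(2)) auto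
    finally show ?thesis by (simp add: power2_eq_square algebra_simps)
  qed
  have Vdec: "V (xs x (Suc k)) \<le> V (xs x k) - 2 * q * (norm (C *v xs x k))^2" for x k
    using Vstep[of "xs x k"] Qb[of "C *v xs x k"] unfolding xsS by simp
  have Vmono: "V (xs x (Suc k)) \<le> V (xs x k)" for x k
  proof -
    have "0 \<le> 2 * q * (norm (C *v xs x k))^2" using q by simp
    then show ?thesis using Vdec[of x k] by linarith
  qed
  have conv0: "(xs x \<longlongrightarrow> 0) sequentially" for x
  proof -
    obtain R where R: "\<And>k. norm (xs x k) \<le> R"
      using bnd[of x] unfolding bounded_iff xs_def B_def by blast
    have decs: "decseq (\<lambda>k. V (xs x k))"
      by (rule decseq_SucI) (rule Vmono)
    have Bs: "Bseq (\<lambda>k. V (xs x k))"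
    proof (rule BseqI'[of _ "Kp * R^2"])
      fix k
      have "norm (V (xs x k)) \<le> Kp * (norm (xs x k))^2" using Vabs by simp
      also have "\<dots> \<le> Kp * R^2"
        using Kp R[of k] by (intro mult_left_mono power_mono) auto
      finally show "norm (V (xs x k)) \<le> Kp * R^2" .
    qed
    have "convergent (\<lambda>k. V (xs x k))"
      using Bseq_monoseq_convergent[OF Bs] decs by (simp add: monoseq_def decseq_def)
    then obtain l where l: "(\<lambda>k. V (xs x k)) \<longlonglongrightarrow> l" by (auto simp: convergent_def)
    have "(\<lambda>k. V (xs x k) - V (xs x (Suc k))) \<longlonglongrightarrow> l - l"
      by (intro tendsto_diff l LIMSEQ_Suc[OF l])
    then have d0: "(\<lambda>k. (V (xs x k) - V (xs x (Suc k))) / (2 * q)) \<longlonglongrightarrow> 0"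
      using tendsto_divide[OF _ tendsto_const[of "2 * q"]] q by fastforce
    have "(\<lambda>k. (norm (C *v xs x k))^2) \<longlonglongrightarrow> 0"
    proof (rule real_tendsto_sandwich[OF _ _ tendsto_const d0])
      show "\<forall>\<^sub>F k in sequentially. 0 \<le> (norm (C *v xs x k))^2" by simp
      show "\<forall>\<^sub>F k in sequentially. (norm (C *v xs x k))^2 \<le> (V (xs x k) - V (xs x (Suc k))) / (2 * q)"
        using Vdec q by (intro always_eventually allI) (simp add: field_simps)
    qed
    then have "(\<lambda>k. sqrt ((norm (C *v xs x k))^2)) \<longlonglongrightarrow> sqrt 0"
      by (rule tendsto_real_sqrt)
    then have "(\<lambda>k. C *v xs x k) \<longlonglongrightarrow> 0"
      by (simp add: tendsto_norm_zero_iff)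
    then have "(\<lambda>k. (Finite_Cartesian_Product.mat 1 - A) *v (C *v xs x k)) \<longlonglongrightarrow> 0"
      by (rule bounded_linear.tendsto_zero[OF matrix_vector_mul_bounded_linear])
    then show ?thesis unfolding zC by simp
  qed
  have Vcont: "isCont V z" for z
    unfolding V_def using cont_quad[where M=P and S=UNIV] by (simp add: continuous_on_eq_continuous_at)
  have V0: "(\<lambda>k. V (xs x k)) \<longlonglongrightarrow> 0" for x
    using isCont_tendsto_compose[OF Vcont conv0] by (simp add: V_def)
  have pd: "x \<bullet> (P *v x) > 0" if "x \<noteq> 0" for x
  proof -
    have decs: "decseq (\<lambda>k. V (xs x k))"
      by (rule decseq_SucI) (rule Vmono)
    have "0 \<le> V (xs x (Suc 0))"
      by (rule LIMSEQ_le_const2[OF V0]) (use decs in \<open>auto simp: decseq_def\<close>)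
    moreover have "C *v x \<noteq> 0" using zC[of x] that by auto
    then have "2 * q * (norm (C *v x))^2 > 0" using q by simp
    moreover have "V (xs x (Suc 0)) \<le> V x - 2 * q * (norm (C *v x))^2"
      using Vdec[of x 0] by (simp only: xs0)
    ultimately have "V x > 0" by linarith
    then show ?thesis by (simp add: V_def)
  qed
  have b0: "\<beta> z w = 0" for z w
  proof -
    have eq: "\<beta> (xs z k) (xs w k) = \<beta> z w" for k
      by (induction k) (simp_all add: xs0 xsS bstep)
    have cb: "continuous_on UNIV (\<lambda>p. \<beta> (fst p) (snd p))"
      unfolding \<beta>_def
      by (intro continuous_intros bounded_linear.continuous_on[OF matrix_vector_mul_bounded_linear])
    have "((\<lambda>k. (xs z k, xs w k)) \<longlongrightarrow> (0, 0)) sequentially"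
      by (intro tendsto_Pair conv0)
    then have "((\<lambda>k. \<beta> (xs z k) (xs w k)) \<longlongrightarrow> \<beta> 0 0) sequentially"
      using continuous_on_tendsto_compose[OF cb, of "\<lambda>k. (xs z k, xs w k)" "(0,0)"] by simp
    then have "(\<lambda>k. \<beta> z w) \<longlonglongrightarrow> 0" unfolding eq by (simp add: \<beta>_def)
    then show ?thesis by (simp add: LIMSEQ_const_iff)
  qed
  have "transpose P *v z = P *v z" for z
  proof -
    have "(transpose P *v z - P *v z) \<bullet> w = 0" for w
      using b0[of z w] unfolding \<beta>_def
      by (simp add: inner_diff_left inner_diff_right inner_mat_transpose[of z P w] inner_commute)
    from this[of "transpose P *v z - P *v z"] show ?thesis by simp
  qed
  then have "transpose P = P" by (simp add: matrix_eq)
  then show ?thesis using pd by blast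
qed

lemma powers_bounded:
  fixes B :: "real^'n^'n"
  assumes ev: "\<And>\<mu> v. v \<noteq> 0 \<Longrightarrow> cmat B *v v = \<mu> *s v \<Longrightarrow> cmod \<mu> < 1"
  shows "bounded (range (\<lambda>k. ((*v) B ^^ k) x))"
proof -
  define N where "N = CARD('n)"
  have N0: "N > 0" unfolding N_def by simp
  obtain ix :: "nat \<Rightarrow> 'n" where bij: "bij_betw ix {0..<N} UNIV"
    using ex_bij_betw_nat_finite[of "UNIV :: 'n set"] unfolding N_def by auto
  have inj: "inj_on ix {0..<N}" and surj: "ix ` {0..<N} = UNIV"
    using bij by (auto simp: bij_betw_def)
  define M :: "complex mat" where "M = Matrix.mat N N (\<lambda>(i,j). complex_of_real (vec_nth (vec_nth B (ix i)) (ix j)))"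
  define tv :: "real^'n \<Rightarrow> complex Matrix.vec" where "tv z = Matrix.vec N (\<lambda>i. complex_of_real (vec_nth z (ix i)))" for z
  have Mc: "M \<in> carrier_mat N N" unfolding M_def by simp
  have tvc: "tv z \<in> carrier_vec N" for z unfolding tv_def by simp
  have reidx: "(\<Sum>j\<in>{0..<N}. g (ix j)) = (\<Sum>k\<in>UNIV. g k)" for g :: "'n \<Rightarrow> 'b::comm_monoid_add"
    using sum.reindex_bij_betw[OF bij, of g] .
  have Mtv: "M *\<^sub>v tv z = tv (B *v z)" for z
  proof (rule eq_vecI)
    show "dim_vec (M *\<^sub>v tv z) = dim_vec (tv (B *v z))" unfolding M_def tv_def by simp
    fix i assume "i < dim_vec (tv (B *v z))"
    then have i: "i < N" unfolding tv_def by simp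
    have "Matrix.vec_index (M *\<^sub>v tv z) i = (\<Sum>j\<in>{0..<N}. complex_of_real (vec_nth (vec_nth B (ix i)) (ix j)) * complex_of_real (vec_nth z (ix j)))"
      using i unfolding M_def tv_def by (simp add: scalar_prod_def)
    also have "\<dots> = complex_of_real (\<Sum>j\<in>{0..<N}. vec_nth (vec_nth B (ix i)) (ix j) * vec_nth z (ix j))"
      by simp
    also have "\<dots> = complex_of_real (\<Sum>k\<in>UNIV. vec_nth (vec_nth B (ix i)) k * vec_nth z k)"
      using reidx[of "\<lambda>k. vec_nth (vec_nth B (ix i)) k * vec_nth z k"] by simp
    also have "\<dots> = Matrix.vec_index (tv (B *v z)) i"
      using i unfolding tv_def by (simp add: matrix_vector_mult_def)
    finally show "Matrix.vec_index (M *\<^sub>v tv z) i = Matrix.vec_index (tv (B *v z)) i" .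
  qed
  have Mpow: "(M ^\<^sub>m k) *\<^sub>v tv z = tv (((*v) B ^^ k) z)" for k z
  proof (induction k arbitrary: z)
    case 0
    then show ?case using Mc tvc by simp
  next
    case (Suc k)
    have "(M ^\<^sub>m Suc k) *\<^sub>v tv z = (M ^\<^sub>m k) *\<^sub>v (M *\<^sub>v tv z)"
      using Mc tvc by (simp add: assoc_mult_mat_vec[of _ N N _ N])
    also have "\<dots> = tv (((*v) B ^^ k) (B *v z))" using Suc Mtv by simp
    also have "\<dots> = tv (((*v) B ^^ Suc k) z)" by (simp only: funpow_Suc_right comp_def)
    finally show ?case .
  qed
  have sr: "spectral_radius M < 1"
  proof -
    obtain lam where lam: "lam \<in> spectrum M" and sr_eq: "spectral_radius M = norm lam"
      using spectral_radius_mem_max(1)[OF Mc N0] by auto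
    from lam obtain v where evec: "eigenvector M v lam"
      unfolding spectrum_def eigenvalue_def by auto
    then have vc: "v \<in> carrier_vec N" and vnz: "v \<noteq> 0\<^sub>v N" and Mv: "M *\<^sub>v v = lam \<cdot>\<^sub>v v"
      unfolding eigenvector_def using Mc by auto
    define w :: "complex^'n" where "w = (\<chi> j. Matrix.vec_index v (inv_into {0..<N} ix j))"
    have wix: "vec_nth w (ix i) = Matrix.vec_index v i" if "i < N" for i
      unfolding w_def using inv_into_f_f[OF inj, of i] that by simp
    have "cmat B *v w = lam *s w"
    proof (rule Finite_Cartesian_Product.vec_eq_iff[THEN iffD2], rule allI)
      fix j :: 'n
      define i0 where "i0 = inv_into {0..<N} ix j"
      have i0: "i0 < N" "ix i0 = j"
      proof -
        have jin: "j \<in> ix ` {0..<N}" using surj by simp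
        show "i0 < N" "ix i0 = j" unfolding i0_def using inv_into_into[OF jin] f_inv_into_f[OF jin] by auto
      qed
      have "vec_nth (cmat B *v w) j = (\<Sum>k\<in>UNIV. complex_of_real (vec_nth (vec_nth B j) k) * vec_nth w k)"
        by (simp add: matrix_vector_mult_def cmat_def)
      also have "\<dots> = (\<Sum>i\<in>{0..<N}. complex_of_real (vec_nth (vec_nth B j) (ix i)) * vec_nth w (ix i))"
        using reidx[of "\<lambda>k. complex_of_real (vec_nth (vec_nth B j) k) * vec_nth w k"] by simp
      also have "\<dots> = (\<Sum>i\<in>{0..<N}. complex_of_real (vec_nth (vec_nth B (ix i0)) (ix i)) * Matrix.vec_index v i)"
        using wix i0 by (intro sum.cong) auto
      also have "\<dots> = Matrix.vec_index (M *\<^sub>v v) i0"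
        using i0 vc unfolding M_def by (simp add: scalar_prod_def)
      also have "\<dots> = lam * Matrix.vec_index v i0"
        using Mv i0 vc by simp
      also have "\<dots> = vec_nth (lam *s w) j"
        using wix[OF i0(1)] i0 by simp
      finally show "vec_nth (cmat B *v w) j = vec_nth (lam *s w) j" .
    qed
    moreover have "w \<noteq> 0"
    proof
      assume w0: "w = 0"
      have "v = 0\<^sub>v N"
      proof (rule eq_vecI)
        fix i assume "i < dim_vec (0\<^sub>v N :: complex Matrix.vec)"
        then have i: "i < N" by simp
        have "Matrix.vec_index v i = vec_nth w (ix i)" using wix[OF i] by simp
        then show "Matrix.vec_index v i = Matrix.vec_index (0\<^sub>v N) i" using w0 i by simp
      qed (use vc in simp)
      then show False using vnz by simp
    qed
    ultimately have "cmod lam < 1" using ev by blast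
    then show ?thesis using sr_eq by simp
  qed
  obtain c where c: "\<And>k. norm_bound (M ^\<^sub>m k) c"
    using spectral_radius_jnf_norm_bound_less_1_upper_triangular[OF Mc sr] by blast
  have comp: "\<bar>vec_nth (((*v) B ^^ k) x) j\<bar> \<le> real N * c * norm x" for k j
  proof -
    define i0 where "i0 = inv_into {0..<N} ix j"
    have i0: "i0 < N" "ix i0 = j"
    proof -
      have jin: "j \<in> ix ` {0..<N}" using surj by simp
      show "i0 < N" "ix i0 = j" unfolding i0_def using inv_into_into[OF jin] f_inv_into_f[OF jin] by auto
    qed
    have pc: "M ^\<^sub>m k \<in> carrier_mat N N" using Mc by simp
    have "\<bar>vec_nth (((*v) B ^^ k) x) j\<bar> = cmod (Matrix.vec_index (tv (((*v) B ^^ k) x)) i0)"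
      using i0 unfolding tv_def by simp
    also have "\<dots> = cmod (Matrix.vec_index ((M ^\<^sub>m k) *\<^sub>v tv x) i0)" by (simp add: Mpow)
    also have "\<dots> = cmod (\<Sum>j\<in>{0..<N}. (M ^\<^sub>m k) $$ (i0, j) * Matrix.vec_index (tv x) j)"
    proof -
      have dr: "dim_row (M ^\<^sub>m k) = N" "dim_col (M ^\<^sub>m k) = N" using pc by auto
      have dv: "dim_vec (tv x) = N" unfolding tv_def by simp
      have "Matrix.vec_index ((M ^\<^sub>m k) *\<^sub>v tv x) i0 = Matrix.row (M ^\<^sub>m k) i0 \<bullet> tv x"
        by (rule index_mult_mat_vec) (simp add: dr i0 M_def)
      also have "\<dots> = (\<Sum>j\<in>{0..<N}. (M ^\<^sub>m k) $$ (i0, j) * Matrix.vec_index (tv x) j)"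
        unfolding scalar_prod_def dv using dr i0 by (intro sum.cong) auto
      finally show ?thesis by simp

    qed
    also have "\<dots> \<le> (\<Sum>j\<in>{0..<N}. cmod ((M ^\<^sub>m k) $$ (i0, j) * Matrix.vec_index (tv x) j))"
      by (rule norm_sum)
    also have "\<dots> \<le> (\<Sum>j\<in>{0..<N}. c * norm x)"
    proof (rule sum_mono)
      fix j assume j: "j \<in> {0..<N}"
      have "cmod ((M ^\<^sub>m k) $$ (i0, j)) \<le> c" using c[of k] i0 j pc unfolding norm_bound_def by (auto simp: M_def)
      moreover have "cmod (Matrix.vec_index (tv x) j) \<le> norm x"
        using j unfolding tv_def by (simp add: component_le_norm_cart)
      ultimately show "cmod ((M ^\<^sub>m k) $$ (i0, j) * Matrix.vec_index (tv x) j) \<le> c * norm x"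
        by (simp add: norm_mult mult_mono')
    qed
    also have "\<dots> = real N * c * norm x" by simp
    finally show ?thesis .
  qed
  have "norm (((*v) B ^^ k) x) \<le> real CARD('n) * (real N * c * norm x)" for k
  proof -
    have "norm (((*v) B ^^ k) x) \<le> (\<Sum>j\<in>UNIV. \<bar>vec_nth (((*v) B ^^ k) x) j\<bar>)" by (rule norm_le_l1_cart)
    also have "\<dots> \<le> (\<Sum>j\<in>(UNIV::'n set). real N * c * norm x)" by (rule sum_mono) (rule comp)
    finally show ?thesis by simp
  qed
  then show ?thesis unfolding bounded_iff by blast
qed



lemma fwd_inv:
  fixes \<phi> :: "real \<Rightarrow> 'a::topological_space"
  assumes ab: "a \<le> b" and cont: "continuous_on {a..b} \<phi>" and S: "closed S" and a: "\<phi> a \<in> S"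
    and ext: "\<And>t. a \<le> t \<Longrightarrow> t < b \<Longrightarrow> (\<forall>\<tau>\<in>{a..t}. \<phi> \<tau> \<in> S) \<Longrightarrow> \<exists>d>0. \<forall>h. 0 < h \<and> h < d \<longrightarrow> \<phi> (t + h) \<in> S"
  shows "\<forall>\<tau>\<in>{a..b}. \<phi> \<tau> \<in> S"
proof -
  define Z where "Z = {t\<in>{a..b}. \<forall>\<tau>\<in>{a..t}. \<phi> \<tau> \<in> S}"
  have aZ: "a \<in> Z" using ab a unfolding Z_def by auto
  have bdd: "bdd_above Z" unfolding Z_def by (auto intro: bdd_aboveI[of _ b])
  define s where "s = Sup Z"
  have as: "a \<le> s" unfolding s_def using aZ bdd by (rule cSup_upper)
  have sb: "s \<le> b" unfolding s_def using aZ by (intro cSup_least) (auto simp: Z_def)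
  have below: "\<phi> \<tau> \<in> S" if h1: "a \<le> \<tau>" and h2: "\<tau> < s" for \<tau>
  proof -
    obtain t where "t \<in> Z" "\<tau> < t" using h2 less_cSup_iff[OF _ bdd] aZ unfolding s_def by blast
    then show ?thesis using h1 unfolding Z_def by auto
  qed
  have sS: "\<phi> s \<in> S"
  proof (cases "a = s")
    case True then show ?thesis using a by simp
  next
    case False
    then have as': "a < s" using as by simp
    have "(\<phi> \<longlongrightarrow> \<phi> s) (at s within {a..b})"
      using cont as sb by (simp add: continuous_on_def)
    then have lim: "(\<phi> \<longlongrightarrow> \<phi> s) (at s within {a..<s})"
      by (rule tendsto_within_subset) (use sb in auto)
    have nb: "at s within {a..<s} \<noteq> bot"
      using as' by (simp add: at_within_eq_bot_iff)
    have ev: "eventually (\<lambda>x. \<phi> x \<in> S) (at s within {a..<s})"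
      using below by (auto simp: eventually_at_filter)
    show ?thesis by (rule Lim_in_closed_set[OF S ev nb lim])
  qed
  have allS: "\<forall>\<tau>\<in>{a..s}. \<phi> \<tau> \<in> S"
    using below sS by (metis atLeastAtMost_iff order_le_less)
  have "s = b"
  proof (rule ccontr)
    assume "s \<noteq> b"
    then have sb': "s < b" using sb by simp
    obtain d where d: "d > 0" "\<And>h. 0 < h \<Longrightarrow> h < d \<Longrightarrow> \<phi> (s + h) \<in> S"
      using ext[OF as sb' allS] by blast
    define t' where "t' = min (s + d/2) b"
    have st': "s < t'" using d sb' unfolding t'_def by simp
    have "t' \<in> Z"
      unfolding Z_def
    proof (safe)
      show "t' \<in> {a..b}" using as st' unfolding t'_def by auto
      fix \<tau> assume \<tau>: "\<tau> \<in> {a..t'}"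
      show "\<phi> \<tau> \<in> S"
      proof (cases "\<tau> \<le> s")
        case True then show ?thesis using allS \<tau> by auto
      next
        case False
        then have "\<phi> (s + (\<tau> - s)) \<in> S" using d(2)[of "\<tau> - s"] \<tau> d(1) unfolding t'_def by auto
        then show ?thesis by simp
      qed
    qed
    then have "t' \<le> s" unfolding s_def using bdd by (rule cSup_upper)
    then show False using st' by simp
  qed
  then show ?thesis using allS by simp
qed

lemma sign_right:
  fixes g :: "real \<Rightarrow> real"
  assumes "(g has_real_derivative l) (at t within {0..})" "l < 0" "t \<ge> 0"
  shows "\<exists>d>0. \<forall>h. 0 < h \<and> h < d \<longrightarrow> g (t + h) < g t"
  using has_real_derivative_neg_dec_right[OF assms(1,2)] assms(3) by force

lemma cont_right_open:
  assumes "continuous (at t within {0..}) \<phi>" "\<phi> t \<in> U" "open U" "t \<ge> (0::real)"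
  shows "\<exists>d>0. \<forall>h. 0 < h \<and> h < d \<longrightarrow> \<phi> (t + h) \<in> U"
proof -
  have "eventually (\<lambda>x. \<phi> x \<in> U) (at t within {0..})"
    by (rule topological_tendstoD[OF assms(1)[unfolded continuous_within] assms(3,2)])
  then obtain d where d: "d > 0" "\<And>x. x \<in> {0..} \<Longrightarrow> x \<noteq> t \<Longrightarrow> dist x t < d \<Longrightarrow> \<phi> x \<in> U"
    unfolding eventually_at by blast
  show ?thesis using d assms(4) by (intro exI[of _ d]) (auto simp: dist_real_def)
qed

lemma at_within_pos: "t > 0 \<Longrightarrow> at t within {0..} = at (t::real)"
  by (rule at_within_nhd[of t "{0<..}", where U=UNIV, simplified]) auto

lemma V_comp_deriv:
  fixes \<phi> :: "real \<Rightarrow> real^'n"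
  assumes sym: "symmetric_mat P" and d: "(\<phi> has_vector_derivative v) (at t within S)"
  shows "((\<lambda>\<tau>. \<phi> \<tau> \<bullet> (P *v \<phi> \<tau>)) has_real_derivative 2 * (\<phi> t \<bullet> (P *v v))) (at t within S)"
proof -
  have d1: "(\<phi> has_derivative (\<lambda>h. h *\<^sub>R v)) (at t within S)" using d by (simp add: has_vector_derivative_def)
  have d2: "((\<lambda>\<tau>. P *v \<phi> \<tau>) has_derivative (\<lambda>h. P *v (h *\<^sub>R v))) (at t within S)"
    by (rule bounded_linear.has_derivative[OF matrix_vector_mul_bounded_linear d1])
  have der: "((\<lambda>\<tau>. \<phi> \<tau> \<bullet> (P *v \<phi> \<tau>)) has_derivative (\<lambda>h. \<phi> t \<bullet> (P *v (h *\<^sub>R v)) + (h *\<^sub>R v) \<bullet> (P *v \<phi> t))) (at t within S)"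
    by (rule has_derivative_inner[OF d1 d2])
  have eq: "(\<lambda>h. \<phi> t \<bullet> (P *v (h *\<^sub>R v)) + (h *\<^sub>R v) \<bullet> (P *v \<phi> t)) = (*) (2 * (\<phi> t \<bullet> (P *v v)))"
    using sym_inner[OF sym, of v "\<phi> t"] by (auto simp: fun_eq_iff matrix_vector_mult_scaleR algebra_simps)
  show ?thesis unfolding has_field_derivative_def using der[unfolded eq] .
qed

lemma W_comp_deriv:
  fixes \<phi> :: "real \<Rightarrow> real^'n"
  assumes W: "(W has_derivative blinfun_apply D) (at (\<phi> t))" and d: "(\<phi> has_vector_derivative v) (at t within S)"
  shows "((\<lambda>\<tau>. W (\<phi> \<tau>)) has_real_derivative blinfun_apply D v) (at t within S)"
proof -
  have d1: "(\<phi> has_derivative (\<lambda>h. h *\<^sub>R v)) (at t within S)" using d by (simp add: has_vector_derivative_def)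
  have "((\<lambda>\<tau>. W (\<phi> \<tau>)) has_derivative (\<lambda>h. blinfun_apply D (h *\<^sub>R v))) (at t within S)"
    by (rule has_derivative_compose[OF d1 W])
  moreover have "(\<lambda>h. blinfun_apply D (h *\<^sub>R v)) = (\<lambda>h. blinfun_apply D v * h)"
    by (auto simp: fun_eq_iff blinfun.scaleR_right)
  ultimately show ?thesis by (simp add: has_field_derivative_def)
qed

lemma decay_lim:
  fixes a k t0 :: real
  assumes "k > 0"
  shows "((\<lambda>t. sqrt (a * exp (- k * (t - t0)))) \<longlongrightarrow> 0) at_top"
proof -
  have "((\<lambda>t. exp (- k * (t - t0))) \<longlongrightarrow> 0) at_top" using assms by real_asymp
  then have "((\<lambda>t. sqrt (a * exp (- k * (t - t0)))) \<longlongrightarrow> sqrt (a * 0)) at_top"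
    by (intro tendsto_intros)
  then show ?thesis by simp
qed



lemma traj:
  fixes f F :: "real^'n \<Rightarrow> real^'n" and P :: "real^'n^'n" and W :: "real^'n \<Rightarrow> real"
    and W' :: "real^'n \<Rightarrow> ((real^'n) \<Rightarrow>\<^sub>L real)" and \<phi> :: "real \<Rightarrow> real^'n"
  assumes Psym: "symmetric_mat P"
    and p: "p > 0" and pP: "\<And>x. p * (norm x)^2 \<le> x \<bullet> (P *v x)"
    and Kp: "Kp > 0" and KP: "\<And>x. x \<bullet> (P *v x) \<le> Kp * (norm x)^2"
    and \<delta>: "\<delta> > 0" and Vdot: "\<And>x. x \<bullet> (P *v x) \<le> c \<Longrightarrow> 2 * (x \<bullet> (P *v f x)) \<le> - \<delta> * (norm x)^2"
    and c: "c > 0"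
    and Xc: "closed X"
    and W_deriv: "\<And>x. x \<in> X \<Longrightarrow> (W has_derivative blinfun_apply (W' x)) (at x)"
    and eps: "\<epsilon> > 0"
    and cond_a: "\<And>x. x \<in> X \<Longrightarrow> c1 \<le> W x \<Longrightarrow> W x \<le> c2 \<Longrightarrow> blinfun_apply (W' x) (f x) \<le> - \<epsilon>"
    and cond_b: "\<And>x. x \<in> X \<Longrightarrow> W x \<le> c1 \<Longrightarrow> x \<bullet> (P *v x) \<le> c"
    and nb: "{x \<in> X. W x \<le> c2} \<inter> frontier X = {}"
    and FE: "\<And>x. x \<in> {x \<in> X. W x \<le> c2} \<union> {x. x \<bullet> (P *v x) \<le> c} \<Longrightarrow> F x = f x"
    and sol: "is_solution F x0 \<phi>" and x0: "x0 \<in> X" "W x0 \<le> c2"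
  shows "(\<forall>t\<ge>0. \<phi> t \<in> {x \<in> X. W x \<le> c2} \<union> {x. x \<bullet> (P *v x) \<le> c}) \<and> (\<phi> \<longlongrightarrow> 0) at_top"
proof -
  define K where "K = {x \<in> X. W x \<le> c2}"
  define V where "V x = x \<bullet> (P *v x)" for x
  define E where "E = {x. V x \<le> c}"
  have phi0: "\<phi> 0 = x0" and der: "\<And>t. t \<ge> 0 \<Longrightarrow> (\<phi> has_vector_derivative F (\<phi> t)) (at t within {0..})"
    using sol unfolding is_solution_def by auto
  have cw: "continuous (at t within {0..}) \<phi>" if "t \<ge> 0" for t
    using has_vector_derivative_continuous[OF der[OF that]] .
  have cont: "continuous_on {0..} \<phi>" using cw by (simp add: continuous_on_eq_continuous_within)
  have contab: "continuous_on {a..b} \<phi>" if "0 \<le> a" for a b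
    using continuous_on_subset[OF cont] that by auto
  have derat: "(\<phi> has_vector_derivative F (\<phi> t)) (at t)" if "t > 0" for t
    using der[of t] that at_within_pos[OF that] by simp
  have Vcont: "continuous_on UNIV V" unfolding V_def by (rule cont_quad)
  have Eclosed: "closed E" unfolding E_def using closed_Collect_le[OF Vcont continuous_on_const] .
  have V0: "V 0 = 0" by (simp add: V_def)
  have Wcont: "continuous_on X W"
    by (rule continuous_at_imp_continuous_on) (use W_deriv has_derivative_continuous in blast)
  have Kclosed: "closed K"
  proof -
    have "K = X \<inter> W -` {..c2}" unfolding K_def by auto
    then show ?thesis using continuous_closed_preimage[OF Wcont Xc, of "{..c2}"] by simp
  qed
  have Kint: "x \<in> interior X" if "x \<in> K" for x
    using that nb closure_subset unfolding K_def frontier_def by blast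
  have ell: "\<phi> t \<in> E" if t0: "0 \<le> t0" "t0 \<le> t" "\<phi> t0 \<in> E" for t0 t
  proof -
    have "\<forall>\<tau>\<in>{t0..t}. \<phi> \<tau> \<in> E"
    proof (rule fwd_inv[OF t0(2) contab[OF t0(1)] Eclosed t0(3)])
      fix s assume s: "t0 \<le> s" "s < t" and pre: "\<forall>\<tau>\<in>{t0..s}. \<phi> \<tau> \<in> E"
      have sE: "\<phi> s \<in> E" using pre s by auto
      have s0: "s \<ge> 0" using s t0 by simp
      show "\<exists>d>0. \<forall>h. 0 < h \<and> h < d \<longrightarrow> \<phi> (s + h) \<in> E"
      proof (cases "V (\<phi> s) < c")
        case True
        have "open {x. V x < c}" using open_Collect_less[OF Vcont continuous_on_const] .
        then obtain d where "d > 0" "\<forall>h. 0 < h \<and> h < d \<longrightarrow> \<phi> (s + h) \<in> {x. V x < c}"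
          using cont_right_open[OF cw[OF s0], of "{x. V x < c}"] True s0 by auto
        then show ?thesis unfolding E_def by force
      next
        case False
        then have Vc: "V (\<phi> s) = c" using sE unfolding E_def by simp
        then have nz: "\<phi> s \<noteq> 0" using c V0 by auto
        have Ff: "F (\<phi> s) = f (\<phi> s)" using FE sE unfolding E_def V_def by auto
        have dV: "((\<lambda>\<tau>. V (\<phi> \<tau>)) has_real_derivative 2 * (\<phi> s \<bullet> (P *v f (\<phi> s)))) (at s within {0..})"
          using V_comp_deriv[OF Psym der[OF s0]] Ff unfolding V_def by simp
        have "2 * (\<phi> s \<bullet> (P *v f (\<phi> s))) \<le> - \<delta> * (norm (\<phi> s))^2"
          using Vdot[of "\<phi> s"] Vc unfolding V_def by simp
        also have "\<dots> < 0" using \<delta> nz by simp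
        finally obtain d where "d > 0" "\<forall>h. 0 < h \<and> h < d \<longrightarrow> V (\<phi> (s + h)) < V (\<phi> s)"
          using sign_right[OF dV _ s0] by blast
        then show ?thesis using Vc unfolding E_def by force
      qed
    qed
    then show ?thesis using t0 by auto
  qed
  define \<kappa> where "\<kappa> = \<delta> / Kp"
  have \<kappa>: "\<kappa> > 0" using \<delta> Kp unfolding \<kappa>_def by simp
  have decay: "V (\<phi> t) \<le> exp (- \<kappa> * (t - t0)) * V (\<phi> t0)" if t0: "0 \<le> t0" "t0 \<le> t" "\<phi> t0 \<in> E" for t0 t
  proof -
    define g where "g s = exp (\<kappa> * s) * V (\<phi> s)" for s
    have "g t \<le> g t0"
    proof (rule DERIV_nonpos_imp_decreasing_open[OF t0(2)])
      fix s assume s: "t0 < s" "s < t"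
      then have s0: "s > 0" using t0 by simp
      have sE: "\<phi> s \<in> E" using ell[OF t0(1) _ t0(3), of s] s by simp
      have Ff: "F (\<phi> s) = f (\<phi> s)" using FE sE unfolding E_def V_def by auto
      have dV: "((\<lambda>\<tau>. V (\<phi> \<tau>)) has_real_derivative 2 * (\<phi> s \<bullet> (P *v f (\<phi> s)))) (at s)"
        using V_comp_deriv[OF Psym derat[OF s0]] Ff unfolding V_def by simp
      have dexp: "((\<lambda>s. exp (\<kappa> * s)) has_real_derivative exp (\<kappa> * s) * \<kappa>) (at s)"
        by (auto intro!: derivative_eq_intros)
      have dg: "(g has_real_derivative exp (\<kappa> * s) * \<kappa> * V (\<phi> s) + 2 * (\<phi> s \<bullet> (P *v f (\<phi> s))) * exp (\<kappa> * s)) (at s)"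
        unfolding g_def by (rule DERIV_mult[OF dexp dV])
      have le: "exp (\<kappa> * s) * \<kappa> * V (\<phi> s) + 2 * (\<phi> s \<bullet> (P *v f (\<phi> s))) * exp (\<kappa> * s) \<le> 0"
      proof -
        have 1: "2 * (\<phi> s \<bullet> (P *v f (\<phi> s))) \<le> - \<delta> * (norm (\<phi> s))^2"
          using Vdot sE unfolding E_def V_def by simp
        have "\<kappa> * V (\<phi> s) \<le> \<kappa> * (Kp * (norm (\<phi> s))^2)"
          using KP[of "\<phi> s"] \<kappa> unfolding V_def by (intro mult_left_mono) auto
        also have "\<dots> = \<delta> * (norm (\<phi> s))^2" unfolding \<kappa>_def using Kp by simp
        finally have "\<kappa> * V (\<phi> s) + 2 * (\<phi> s \<bullet> (P *v f (\<phi> s))) \<le> 0" using 1 by linarith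
        then have "exp (\<kappa> * s) * (\<kappa> * V (\<phi> s) + 2 * (\<phi> s \<bullet> (P *v f (\<phi> s)))) \<le> 0"
          by (simp add: mult_nonneg_nonpos)
        then show ?thesis by (simp add: algebra_simps)
      qed
      show "\<exists>y. DERIV g s :> y \<and> y \<le> 0" using dg le by blast
    next
      show "continuous_on {t0..t} g" unfolding g_def
        by (intro continuous_intros continuous_on_compose2[OF Vcont contab[OF t0(1)]]) auto
    qed
    then have "exp (\<kappa> * t) * V (\<phi> t) \<le> exp (\<kappa> * t0) * V (\<phi> t0)" unfolding g_def .
    then have "V (\<phi> t) \<le> exp (\<kappa> * t0) * V (\<phi> t0) / exp (\<kappa> * t)"
      by (simp add: pos_le_divide_eq mult.commute)
    also have "\<dots> = exp (- \<kappa> * (t - t0)) * V (\<phi> t0)"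
    proof -
      have "exp (- \<kappa> * (t - t0)) = exp (\<kappa> * t0) / exp (\<kappa> * t)"
        by (simp add: exp_diff[symmetric] algebra_simps)
      then show ?thesis by simp
    qed
    finally show ?thesis .
  qed
  have phase: "\<exists>t0\<ge>0. \<phi> t0 \<in> E \<and> (\<forall>\<tau>\<in>{0..t0}. \<phi> \<tau> \<in> K)"
  proof (cases "W x0 \<le> c1")
    case True
    then have "\<phi> 0 \<in> E" using cond_b[OF x0(1)] phi0 unfolding E_def V_def by simp
    moreover have "\<forall>\<tau>\<in>{0..0}. \<phi> \<tau> \<in> K" using phi0 x0 unfolding K_def by simp
    ultimately show ?thesis by blast
  next
    case False
    show ?thesis
    proof (rule ccontr)
      assume H: "\<not> ?thesis"
      have Hc: "W (\<phi> t0) > c1" if h1: "t0 \<ge> 0" and h2: "\<forall>\<tau>\<in>{0..t0}. \<phi> \<tau> \<in> K" for t0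
      proof (rule ccontr)
        assume "\<not> W (\<phi> t0) > c1"
        moreover have "\<phi> t0 \<in> X" using h1 h2 unfolding K_def by auto
        ultimately have "\<phi> t0 \<in> E" using cond_b unfolding E_def V_def by force
        then show False using H h1 h2 by blast
      qed
      define b where "b = (W x0 - c1) / \<epsilon> + 1"
      have "(W x0 - c1) / \<epsilon> \<ge> 0" using False eps by simp
      then have b0: "b > 0" unfolding b_def by linarith
      have inv: "\<forall>\<tau>\<in>{0..b}. \<phi> \<tau> \<in> K"
      proof (rule fwd_inv[OF less_imp_le[OF b0] contab[of 0] Kclosed])
        show "0 \<le> (0::real)" by simp
        show "\<phi> 0 \<in> K" using phi0 x0 unfolding K_def by simp
        fix t assume t: "0 \<le> t" "t < b" and pre: "\<forall>\<tau>\<in>{0..t}. \<phi> \<tau> \<in> K"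
        have tK: "\<phi> t \<in> K" using pre t by auto
        have Wgt: "W (\<phi> t) > c1" using Hc[OF t(1) pre] .
        have Ff: "F (\<phi> t) = f (\<phi> t)" using FE tK unfolding K_def by auto
        have tX: "\<phi> t \<in> X" "W (\<phi> t) \<le> c2" using tK unfolding K_def by auto
        have dW: "((\<lambda>\<tau>. W (\<phi> \<tau>)) has_real_derivative blinfun_apply (W' (\<phi> t)) (f (\<phi> t))) (at t within {0..})"
          using W_comp_deriv[OF W_deriv[OF tX(1)] der[OF t(1)]] Ff by simp
        have neg: "blinfun_apply (W' (\<phi> t)) (f (\<phi> t)) < 0"
          using cond_a[OF tX(1) _ tX(2)] Wgt eps by force
        obtain d1 where d1: "d1 > 0" "\<forall>h. 0 < h \<and> h < d1 \<longrightarrow> W (\<phi> (t + h)) < W (\<phi> t)"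
          using sign_right[OF dW neg t(1)] by blast
        obtain d2 where d2: "d2 > 0" "\<forall>h. 0 < h \<and> h < d2 \<longrightarrow> \<phi> (t + h) \<in> interior X"
          using cont_right_open[OF cw[OF t(1)] Kint[OF tK] open_interior t(1)] by blast
        show "\<exists>d>0. \<forall>h. 0 < h \<and> h < d \<longrightarrow> \<phi> (t + h) \<in> K"
        proof (intro exI[of _ "min d1 d2"] conjI allI impI)
          show "min d1 d2 > 0" using d1 d2 by simp
          fix h assume h: "0 < h \<and> h < min d1 d2"
          then have "\<phi> (t + h) \<in> interior X" "W (\<phi> (t + h)) < W (\<phi> t)" using d1 d2 by auto
          then show "\<phi> (t + h) \<in> K" using tX interior_subset unfolding K_def by fastforce
        qed
      qed
      define g where "g \<tau> = W (\<phi> \<tau>) + \<epsilon> * \<tau>" for \<tau>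
      have "g b \<le> g 0"
      proof (rule DERIV_nonpos_imp_decreasing_open[OF less_imp_le[OF b0]])
        fix \<tau> assume \<tau>: "0 < \<tau>" "\<tau> < b"
        have \<tau>K: "\<phi> \<tau> \<in> K" using inv \<tau> by auto
        have pre: "\<forall>s\<in>{0..\<tau>}. \<phi> s \<in> K" using inv \<tau> by auto
        have Wgt: "W (\<phi> \<tau>) > c1" using Hc[OF _ pre] \<tau> by simp
        have tX: "\<phi> \<tau> \<in> X" "W (\<phi> \<tau>) \<le> c2" using \<tau>K unfolding K_def by auto
        have Ff: "F (\<phi> \<tau>) = f (\<phi> \<tau>)" using FE \<tau>K unfolding K_def by auto
        have dW: "((\<lambda>s. W (\<phi> s)) has_real_derivative blinfun_apply (W' (\<phi> \<tau>)) (f (\<phi> \<tau>))) (at \<tau>)"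
          using W_comp_deriv[OF W_deriv[OF tX(1)] derat[OF \<tau>(1)]] Ff by simp
        have "(g has_real_derivative blinfun_apply (W' (\<phi> \<tau>)) (f (\<phi> \<tau>)) + \<epsilon>) (at \<tau>)"
          unfolding g_def by (rule DERIV_add[OF dW DERIV_cmult_Id])
        moreover have "blinfun_apply (W' (\<phi> \<tau>)) (f (\<phi> \<tau>)) + \<epsilon> \<le> 0"
          using cond_a[OF tX(1) _ tX(2)] Wgt by force
        ultimately show "\<exists>y. DERIV g \<tau> :> y \<and> y \<le> 0" by blast
      next
        have "continuous_on {0..b} (\<lambda>\<tau>. W (\<phi> \<tau>))"
          by (rule continuous_on_compose2[OF Wcont contab[of 0]]) (use inv in \<open>auto simp: K_def\<close>)
        then show "continuous_on {0..b} g" unfolding g_def by (intro continuous_intros)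
      qed
      then have "W (\<phi> b) + \<epsilon> * b \<le> W x0" unfolding g_def using phi0 by simp
      moreover have "\<epsilon> * b = W x0 - c1 + \<epsilon>" unfolding b_def using eps by (simp add: field_simps)
      moreover have "W (\<phi> b) > c1" using Hc[of b] inv b0 by auto
      ultimately show False using eps by linarith
    qed
  qed
  then obtain t0 where t0: "t0 \<ge> 0" "\<phi> t0 \<in> E" "\<forall>\<tau>\<in>{0..t0}. \<phi> \<tau> \<in> K" by blast
  have inv_all: "\<forall>t\<ge>0. \<phi> t \<in> K \<union> E"
  proof (intro allI impI)
    fix t :: real assume t: "t \<ge> 0"
    show "\<phi> t \<in> K \<union> E"
    proof (cases "t \<le> t0")
      case True then show ?thesis using t0 t by auto
    next
      case False then show ?thesis using ell[OF t0(1) _ t0(2), of t] by auto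
    qed
  qed
  have lim: "(\<phi> \<longlongrightarrow> 0) at_top"
  proof (rule Lim_null_comparison)
    show "((\<lambda>t. sqrt (c / p * exp (- \<kappa> * (t - t0)))) \<longlongrightarrow> 0) at_top" by (rule decay_lim[OF \<kappa>])
    show "\<forall>\<^sub>F t in at_top. norm (\<phi> t) \<le> sqrt (c / p * exp (- \<kappa> * (t - t0)))"
    proof (rule eventually_at_top_linorderI[of t0])
      fix t assume t: "t \<ge> t0"
      have "p * (norm (\<phi> t))^2 \<le> V (\<phi> t)" using pP unfolding V_def by simp
      also have "\<dots> \<le> exp (- \<kappa> * (t - t0)) * V (\<phi> t0)" by (rule decay[OF t0(1) t t0(2)])
      also have "\<dots> \<le> exp (- \<kappa> * (t - t0)) * c" using t0(2) unfolding E_def by (intro mult_left_mono) auto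
      finally have "(norm (\<phi> t))^2 \<le> c / p * exp (- \<kappa> * (t - t0))" using p by (simp add: field_simps)
      then show "norm (\<phi> t) \<le> sqrt (c / p * exp (- \<kappa> * (t - t0)))" by (rule real_le_rsqrt)
    qed
  qed
  show ?thesis using inv_all lim unfolding K_def E_def V_def by auto
qed


theorem proposition3:
  fixes f :: "real^'n \<Rightarrow> real^'n"
    and f' :: "real^'n \<Rightarrow> ((real^'n) \<Rightarrow>\<^sub>L (real^'n))"
    and A P Q :: "real^'n^'n"
    and c r \<epsilon> c1 c2 :: real
    and X :: "(real^'n) set"
    and W :: "real^'n \<Rightarrow> real"
    and W' :: "real^'n \<Rightarrow> ((real^'n) \<Rightarrow>\<^sub>L real)"
  assumes f_deriv: "\<And>x. (f has_derivative blinfun_apply (f' x)) (at x)"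
    and f'_cont: "continuous_on UNIV f'"
    and f0: "f 0 = 0"
    and A_def: "(f has_derivative (\<lambda>x. A *v x)) (at 0)"
    and A_hurwitz: "hurwitz A"
    and Q_sym: "symmetric_mat Q" and Q_pd: "pos_def_mat Q"
    and lyap: "P ** A + transpose A ** P = - Q"
    and c_pos: "c > 0" and r_pos: "r > 0" and r_less: "r < lambda_min Q"
    and local_bound: "\<And>x. x \<bullet> (P *v x) \<le> c \<Longrightarrow>
                         2 * (x \<bullet> (P *v (f x - A *v x))) \<le> r * (norm x)^2"
    and X_compact: "compact X"
    and W_deriv: "\<And>x. x \<in> X \<Longrightarrow> (W has_derivative blinfun_apply (W' x)) (at x)"
    and W'_cont: "continuous_on X W'"
    and eps_pos: "\<epsilon> > 0" and c1_pos: "c1 > 0" and c12: "c1 < c2"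
    and cond_a: "\<And>x. x \<in> X \<Longrightarrow> c1 \<le> W x \<Longrightarrow> W x \<le> c2 \<Longrightarrow> blinfun_apply (W' x) (f x) \<le> - \<epsilon>"
    and cond_b: "\<And>x. x \<in> X \<Longrightarrow> W x \<le> c1 \<Longrightarrow> x \<bullet> (P *v x) \<le> c"
    and no_boundary: "{x \<in> X. W x \<le> c2} \<inter> frontier X = {}"
  shows "{x \<in> X. W x \<le> c2} \<subseteq> domain_of_attraction f"
proof -
  obtain m where m: "lambda_min Q \<le> m" "\<And>x. m * (norm x)^2 \<le> x \<bullet> (Q *v x)"
    using lambda_min_bound[OF Q_sym] by blast
  have mr: "r < m" using r_less m(1) by simp
  have m0: "m > 0" using r_pos mr by simp
  obtain C where C: "(Finite_Cartesian_Product.mat 1 - A) ** C = Finite_Cartesian_Product.mat 1"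
    using hurwitz_inv[OF A_hurwitz] by blast
  have evc: "\<And>\<mu> v. v \<noteq> 0 \<Longrightarrow> cmat ((Finite_Cartesian_Product.mat 1 + A) ** C) *v v = \<mu> *s v \<Longrightarrow> cmod \<mu> < 1"
    using cayley_ev[OF A_hurwitz C] by blast
  have bnd: "\<And>x. bounded (range (\<lambda>k. ((*v) ((Finite_Cartesian_Product.mat 1 + A) ** C) ^^ k) x))"
    by (rule powers_bounded[OF evc])
  have PP: "transpose P = P \<and> (\<forall>x. x \<noteq> 0 \<longrightarrow> x \<bullet> (P *v x) > 0)"
    by (rule lyap_discrete[OF lyap Q_sym m0 m(2) C bnd])
  then have Psym: "symmetric_mat P" by (simp add: symmetric_mat_def)
  obtain p where p: "p > 0" "\<And>x. p * (norm x)^2 \<le> x \<bullet> (P *v x)"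
    using pd_bound[where M=P] PP by blast
  obtain Kp where Kp: "Kp > 0" "\<And>v. norm (P *v v) \<le> norm v * Kp"
    using bounded_linear.pos_bounded[OF matrix_vector_mul_bounded_linear[of P]] by blast
  have KP: "x \<bullet> (P *v x) \<le> Kp * (norm x)^2" for x
  proof -
    have "x \<bullet> (P *v x) \<le> norm x * norm (P *v x)" by (rule norm_cauchy_schwarz)
    also have "\<dots> \<le> norm x * (norm x * Kp)" by (intro mult_left_mono Kp(2)) auto
    finally show ?thesis by (simp add: power2_eq_square algebra_simps)
  qed
  define \<delta> where "\<delta> = m - r"
  have \<delta>: "\<delta> > 0" using mr unfolding \<delta>_def by simp
  have Vdot: "2 * (x \<bullet> (P *v f x)) \<le> - \<delta> * (norm x)^2" if h: "x \<bullet> (P *v x) \<le> c" for x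
  proof -
    have "P *v f x = P *v (A *v x) + P *v (f x - A *v x)"
      by (metis add.commute diff_add_cancel matrix_vector_right_distrib)
    then have e1: "2 * (x \<bullet> (P *v f x)) = 2 * (x \<bullet> (P *v (A *v x))) + 2 * (x \<bullet> (P *v (f x - A *v x)))"
      by (simp add: inner_add_right algebra_simps)
    have t: "x \<bullet> (transpose A *v (P *v x)) = (A *v x) \<bullet> (P *v x)"
      using inner_mat_transpose[of x "transpose A" "P *v x"] by (metis Finite_Cartesian_Product.transpose_transpose)
    have "x \<bullet> ((P ** A + transpose A ** P) *v x) = x \<bullet> (P *v (A *v x)) + x \<bullet> (transpose A *v (P *v x))"
      by (simp del: transpose_matrix_vector add: matrix_vector_mult_add_rdistrib matrix_vector_mul_assoc inner_add_right)
    also have "\<dots> = 2 * (x \<bullet> (P *v (A *v x)))"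
      using t sym_inner[OF Psym, of "A *v x" x] by simp
    finally have e2: "2 * (x \<bullet> (P *v (A *v x))) = - (x \<bullet> (Q *v x))"
      unfolding lyap neg_mv by simp
    have "2 * (x \<bullet> (P *v f x)) \<le> - (m * (norm x)^2) + r * (norm x)^2"
      using e1 e2 m(2)[of x] local_bound[OF h] by linarith
    then show ?thesis unfolding \<delta>_def by (simp add: algebra_simps)
  qed
  define K where "K = {x \<in> X. W x \<le> c2}"
  define E where "E = {x. x \<bullet> (P *v x) \<le> c}"
  have Xc: "closed X" using X_compact by (rule compact_imp_closed)
  have bK: "bounded K" unfolding K_def using compact_imp_bounded[OF X_compact] by (rule bounded_subset) auto
  have bE: "bounded E"
  proof -
    have "norm x \<le> sqrt (c / p)" if "x \<in> E" for x
    proof -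
      have "p * (norm x)^2 \<le> c" using p(2)[of x] that unfolding E_def by simp
      then have "(norm x)^2 \<le> c / p" using p(1) by (simp add: field_simps)
      then show ?thesis by (rule real_le_rsqrt)
    qed
    then show ?thesis unfolding bounded_iff by blast
  qed
  have "bounded (K \<union> E)" using bK bE by (simp only: bounded_Un)
  then obtain Rad where Rad0: "Rad > 0" and RadB: "\<forall>x\<in>K \<union> E. norm x \<le> Rad"
    by (meson bounded_pos)
  have Rad: "Rad > 0" "\<And>x. x \<in> K \<union> E \<Longrightarrow> norm x \<le> Rad" using Rad0 RadB by auto
  define B where "B = cball (0::real^'n) Rad"
  have Bc: "convex B" "closed B" "B \<noteq> {}" "compact B" using Rad unfolding B_def by auto
  have RB: "K \<union> E \<subseteq> B" using Rad unfolding B_def by auto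
  have "bounded (f' ` B)"
    using compact_imp_bounded[OF compact_continuous_image[OF continuous_on_subset[OF f'_cont] Bc(4)]] by simp
  then obtain Mb where Mb: "\<And>x. x \<in> B \<Longrightarrow> norm (f' x) \<le> Mb"
    unfolding bounded_iff by blast
  have lipB: "norm (f x - f y) \<le> Mb * norm (x - y)" if "x \<in> B" "y \<in> B" for x y
  proof (rule differentiable_bound[OF Bc(1) _ _ that])
    show "\<And>x. x \<in> B \<Longrightarrow> (f has_derivative blinfun_apply (f' x)) (at x within B)"
      using f_deriv by (rule has_derivative_at_withinI)
    show "\<And>x. x \<in> B \<Longrightarrow> onorm (blinfun_apply (f' x)) \<le> Mb"
      using Mb by (simp add: norm_blinfun.rep_eq[symmetric])
  qed
  define L where "L = max Mb 1"
  define Ft where "Ft x = f (closest_point B x)" for x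
  have lipF: "norm (Ft x - Ft y) \<le> L * norm (x - y)" for x y
  proof -
    have cx: "closest_point B x \<in> B" "closest_point B y \<in> B"
      using closest_point_in_set[OF Bc(2,3)] by auto
    have "norm (Ft x - Ft y) \<le> Mb * norm (closest_point B x - closest_point B y)"
      unfolding Ft_def by (rule lipB[OF cx])
    also have "\<dots> \<le> L * norm (closest_point B x - closest_point B y)"
      unfolding L_def by (intro mult_right_mono) auto
    also have "\<dots> \<le> L * norm (x - y)"
      using closest_point_lipschitz[OF Bc(1,2,3), of x y] unfolding L_def dist_norm
      by (intro mult_left_mono) auto
    finally show ?thesis .
  qed
  have L0: "L > 0" unfolding L_def by simp
  have FtR: "Ft x = f x" if "x \<in> K \<union> E" for x
    using RB that unfolding Ft_def by (auto simp: closest_point_self)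
  have Ft0: "Ft 0 = 0" unfolding Ft_def using Rad(1) f0 by (simp add: B_def closest_point_self)
  show ?thesis
  proof
    fix x0 assume "x0 \<in> {x \<in> X. W x \<le> c2}"
    then have x0: "x0 \<in> X" "W x0 \<le> c2" by auto
    obtain \<phi> where solt: "is_solution Ft x0 \<phi>"
      using ode_exists[OF L0 lipF Ft0] by blast
    have FE1: "\<And>x. x \<in> {x \<in> X. W x \<le> c2} \<union> {x. x \<bullet> (P *v x) \<le> c} \<Longrightarrow> Ft x = f x"
      using FtR unfolding K_def E_def by blast
    have tr: "(\<forall>t\<ge>0. \<phi> t \<in> {x \<in> X. W x \<le> c2} \<union> {x. x \<bullet> (P *v x) \<le> c}) \<and> (\<phi> \<longlongrightarrow> 0) at_top"
      by (rule traj[OF Psym p(1) p(2) Kp(1) KP \<delta> Vdot c_pos Xc W_deriv eps_pos cond_a cond_b no_boundary FE1 solt x0])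
    have "is_solution f x0 \<phi>"
      using solt tr FE1 unfolding is_solution_def by auto
    moreover have "(\<psi> \<longlongrightarrow> 0) at_top" if "is_solution f x0 \<psi>" for \<psi>
    proof -
      have FE2: "\<And>x. x \<in> {x \<in> X. W x \<le> c2} \<union> {x. x \<bullet> (P *v x) \<le> c} \<Longrightarrow> f x = f x" by simp
      show ?thesis
        using traj[OF Psym p(1) p(2) Kp(1) KP \<delta> Vdot c_pos Xc W_deriv eps_pos cond_a cond_b no_boundary FE2 that x0]
        by blast
    qed
    ultimately show "x0 \<in> domain_of_attraction f"
      unfolding domain_of_attraction_def by blast
  qed
qed

end
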